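(* Let $n\ge5$ be odd and $M$ an $n\times n$ HW-matrix. There is no spin$^c$ set for $M$.
   Context: $\mathcal S=\{0,1,2,3\}$ is the Klein four-group ($\mathbb Z_2$-vector space) with $x+x=0$, $1+2=3$, $1+3=2$, $2+3=1$. $\mathcal P_n$ is the power set of $\{1,\dots,n\}$ (addition = symmetric difference, product = intersection); $|U|_2=|U|\bmod 2$; $J_M(U)=\{j:\sum_{i\in U}M_{ij}=1\}$. $M$ is an HW-matrix if it has $1$ on the diagonal and $2$ or $3$ off the diagonal, all column sums are $0$, and $J_M(U)\ne\emptyset$ for all $U\ne\emptyset,\{1,\dots,n\}$. $S\in\mathcal P_n$ is a spin$^c$ set for $M$ if $|(J_M(U)+U)\cap S|_2=\binom{|U|}2\bmod 2$ for all $U\in\mathcal P_n$. *)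

theory Defs
  imports Main
begin

text \<open>The Klein four-group S = {0,1,2,3}, realised as naturals below 4 with
  bitwise exclusive-or as addition (0 neutral, x+x=0, 1+2=3, 1+3=2, 2+3=1).\<close>

definition kplus :: "nat \<Rightarrow> nat \<Rightarrow> nat" where
  "kplus a b = xor a b"

definition ksum :: "(nat \<Rightarrow> nat) \<Rightarrow> nat set \<Rightarrow> nat" where
  "ksum f U = foldr (\<lambda>i acc. kplus (f i) acc) (sorted_list_of_set U) 0"

definition JM :: "(nat \<Rightarrow> nat \<Rightarrow> nat) \<Rightarrow> nat \<Rightarrow> nat set \<Rightarrow> nat set" where
  "JM M n U = {j \<in> {1..n}. ksum (\<lambda>i. M i j) U = 1}"

definition HW_matrix :: "nat \<Rightarrow> (nat \<Rightarrow> nat \<Rightarrow> nat) \<Rightarrow> bool" where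
  "HW_matrix n M \<longleftrightarrow>
     (\<forall>i\<in>{1..n}. M i i = 1) \<and>
     (\<forall>i\<in>{1..n}. \<forall>j\<in>{1..n}. i \<noteq> j \<longrightarrow> M i j = 2 \<or> M i j = 3) \<and>
     (\<forall>j\<in>{1..n}. ksum (\<lambda>i. M i j) {1..n} = 0) \<and>
     (\<forall>U. U \<subseteq> {1..n} \<and> U \<noteq> {} \<and> U \<noteq> {1..n} \<longrightarrow> JM M n U \<noteq> {})"

definition symdiff :: "nat set \<Rightarrow> nat set \<Rightarrow> nat set" where
  "symdiff A B = (A - B) \<union> (B - A)"

definition spinc_set :: "nat \<Rightarrow> (nat \<Rightarrow> nat \<Rightarrow> nat) \<Rightarrow> nat set \<Rightarrow> bool" where
  "spinc_set n M S \<longleftrightarrow> S \<subseteq> {1..n} \<and>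
     (\<forall>U. U \<subseteq> {1..n} \<longrightarrow>
        card (symdiff (JM M n U) U \<inter> S) mod 2 = (card U choose 2) mod 2)"

end

theory Submission
  imports Defs
begin

lemma kplus_tab: "a < 4 \<Longrightarrow> b < 4 \<Longrightarrow> kplus a b = (if odd a \<noteq> odd b then 1 else 0) + (if (2 \<le> a) \<noteq> (2 \<le> b) then 2 else 0)"
proof -
  assume "a < 4" "b < 4"
  then have "a = 0 \<or> a = 1 \<or> a = 2 \<or> a = 3" "b = 0 \<or> b = 1 \<or> b = 2 \<or> b = 3" by auto
  then show ?thesis unfolding kplus_def by auto
qed

lemma foldr_k:
  "\<forall>i\<in>set xs. f i < (4::nat) \<Longrightarrow> foldr (\<lambda>i acc. kplus (f i) acc) xs 0 =
     (if odd (length (filter (\<lambda>i. odd (f i)) xs)) then 1 else 0) + (if odd (length (filter (\<lambda>i. 2 \<le> f i) xs)) then 2 else 0)"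
proof (induction xs)
  case Nil then show ?case by simp
next
  case (Cons x xs)
  let ?v = "foldr (\<lambda>i acc. kplus (f i) acc) xs 0"
  have v: "?v = (if odd (length (filter (\<lambda>i. odd (f i)) xs)) then 1 else 0) + (if odd (length (filter (\<lambda>i. 2 \<le> f i) xs)) then 2 else 0)"
    using Cons by auto
  have "?v < 4" unfolding v by auto
  moreover have "f x < 4" using Cons by auto
  ultimately have "kplus (f x) ?v = (if odd (f x) \<noteq> odd ?v then 1 else 0) + (if (2 \<le> f x) \<noteq> (2 \<le> ?v) then 2 else 0)"
    using kplus_tab by blast
  moreover have "odd ?v \<longleftrightarrow> odd (length (filter (\<lambda>i. odd (f i)) xs))" unfolding v by auto
  moreover have "2 \<le> ?v \<longleftrightarrow> odd (length (filter (\<lambda>i. 2 \<le> f i) xs))" unfolding v by auto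
  ultimately show ?case by auto
qed

lemma ksum_char:
  assumes "finite U" "\<forall>i\<in>U. f i < (4::nat)"
  shows "ksum f U = (if odd (card {i\<in>U. odd (f i)}) then 1 else 0) + (if odd (card {i\<in>U. 2 \<le> f i}) then 2 else 0)"
proof -
  have d: "distinct (sorted_list_of_set U)" and s: "set (sorted_list_of_set U) = U" using assms by auto
  have c: "length (filter P (sorted_list_of_set U)) = card {i\<in>U. P i}" for P
    using distinct_card[of "filter P (sorted_list_of_set U)"] d s by auto
  show ?thesis unfolding ksum_def using foldr_k[of "sorted_list_of_set U" f] assms s c by auto
qed

lemma ksum_eq1:
  assumes "finite U" "\<forall>i\<in>U. f i < (4::nat)"
  shows "ksum f U = 1 \<longleftrightarrow> odd (card {i\<in>U. odd (f i)}) \<and> even (card {i\<in>U. 2 \<le> f i})"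
  using ksum_char[OF assms] by auto

lemma ksum_eq0:
  assumes "finite U" "\<forall>i\<in>U. f i < (4::nat)"
  shows "ksum f U = 0 \<longleftrightarrow> even (card {i\<in>U. odd (f i)}) \<and> even (card {i\<in>U. 2 \<le> f i})"
  using ksum_char[OF assms] by auto
lemma card_pair_filter: "k \<noteq> l \<Longrightarrow> card {i\<in>{k,l}. P i} = of_bool (P k) + of_bool (P l)"
proof -
  assume "k \<noteq> l"
  have "{i\<in>{k,l}. P i} = (if P k then {k} else {}) \<union> (if P l then {l} else {})" by auto
  then show ?thesis using \<open>k \<noteq> l\<close> by auto
qed

lemma card_triple_filter: "i \<noteq> j \<Longrightarrow> i \<noteq> k \<Longrightarrow> j \<noteq> k \<Longrightarrow>
   card {x\<in>{i,j,k}. P x} = of_bool (P i) + of_bool (P j) + of_bool (P k)"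
proof -
  assume "i \<noteq> j" "i \<noteq> k" "j \<noteq> k"
  have "{x\<in>{i,j,k}. P x} = (if P i then {i} else {}) \<union> ((if P j then {j} else {}) \<union> (if P k then {k} else {}))" by auto
  then show ?thesis using \<open>i \<noteq> j\<close> \<open>i \<noteq> k\<close> \<open>j \<noteq> k\<close> by (auto simp: card_Un_disjoint)
qed


lemma hw_props:
  assumes "HW_matrix n M" "i \<in> {1..n}" "j \<in> {1..n}"
  shows "M i j < 4" "2 \<le> M i j \<longleftrightarrow> i \<noteq> j" "odd (M i j) \<longleftrightarrow> (i = j \<or> M i j = 3)"
proof -
  have d: "i = j \<Longrightarrow> M i j = 1" using assms unfolding HW_matrix_def by blast
  have o: "i \<noteq> j \<Longrightarrow> M i j = 2 \<or> M i j = 3" using assms unfolding HW_matrix_def by blast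
  show "M i j < 4" using d o by (cases "i = j") auto
  show "2 \<le> M i j \<longleftrightarrow> i \<noteq> j" using d o by (cases "i = j") auto
  show "odd (M i j) \<longleftrightarrow> (i = j \<or> M i j = 3)" using d o by (cases "i = j") auto
qed

lemma hw_col:
  assumes "HW_matrix n M" "j \<in> {1..n}"
  shows "odd (card {i\<in>{1..n}-{j}. M i j = 3})"
proof -
  have "\<forall>i\<in>{1..n}. M i j < 4" using hw_props[OF assms(1) _ assms(2)] by auto
  moreover have "ksum (\<lambda>i. M i j) {1..n} = 0" using assms unfolding HW_matrix_def by auto
  ultimately have e: "even (card {i\<in>{1..n}. odd (M i j)})" using ksum_eq0[of "{1..n}" "\<lambda>i. M i j"] by auto
  have "{i\<in>{1..n}. odd (M i j)} = insert j {i\<in>{1..n}-{j}. M i j = 3}"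
    using hw_props[OF assms(1) _ assms(2)] assms(2) by auto
  moreover have "card (insert j {i\<in>{1..n}-{j}. M i j = 3}) = Suc (card {i\<in>{1..n}-{j}. M i j = 3})"
    by (rule card_insert_disjoint) auto
  ultimately show ?thesis using e by auto
qed


lemma hw_tri:
  assumes "HW_matrix n M" "n \<ge> 5" "i \<in> {1..n}" "j \<in> {1..n}" "k \<in> {1..n}" "i \<noteq> j" "i \<noteq> k" "j \<noteq> k"
  shows "(M j i = 3) = (M k i = 3) \<or> (M i j = 3) = (M k j = 3) \<or> (M i k = 3) = (M j k = 3)"
proof -
  let ?U = "{i,j,k}"
  have cU: "card ?U = 3" using assms by auto
  have "?U \<noteq> {1..n}"
  proof
    assume "?U = {1..n}"
    then have "card {1..n} = 3" using cU by simp
    then show False using assms(2) by simp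
  qed
  moreover have "?U \<subseteq> {1..n}" "?U \<noteq> {}" using assms by auto
  ultimately have "JM M n ?U \<noteq> {}" using assms(1) unfolding HW_matrix_def by blast
  then obtain m where m: "m \<in> {1..n}" "ksum (\<lambda>x. M x m) ?U = 1" unfolding JM_def by auto
  have lt: "\<forall>x\<in>?U. M x m < 4" using hw_props(1)[OF assms(1) _ m(1)] assms by auto
  have c: "odd (card {x\<in>?U. odd (M x m)})" "even (card {x\<in>?U. 2 \<le> M x m})"
    using ksum_eq1[of ?U "\<lambda>x. M x m"] lt m(2) by auto
  have two: "\<And>x. x \<in> ?U \<Longrightarrow> 2 \<le> M x m \<longleftrightarrow> x \<noteq> m" using hw_props(2)[OF assms(1) _ m(1)] assms by auto
  have od: "\<And>x. x \<in> ?U \<Longrightarrow> odd (M x m) \<longleftrightarrow> (x = m \<or> M x m = 3)" using hw_props(3)[OF assms(1) _ m(1)] assms by auto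
  have c2: "card {x\<in>?U. 2 \<le> M x m} = of_bool (i \<noteq> m) + of_bool (j \<noteq> m) + of_bool (k \<noteq> m)"
    using card_triple_filter[OF assms(6-8), of "\<lambda>x. 2 \<le> M x m"] two by auto
  have c1: "card {x\<in>?U. odd (M x m)} = of_bool (i = m \<or> M i m = 3) + of_bool (j = m \<or> M j m = 3) + of_bool (k = m \<or> M k m = 3)"
    using card_triple_filter[OF assms(6-8), of "\<lambda>x. odd (M x m)"] od by auto
  show ?thesis
  proof (cases "m = i \<or> m = j \<or> m = k")
    case True
    then show ?thesis using c c1 assms(6-8) by (elim disjE) auto
  next
    case False
    then show ?thesis using c(2) c2 by auto
  qed
qed


lemma hw_JM_pair:
  assumes "HW_matrix n M" "k \<in> {1..n}" "l \<in> {1..n}" "k \<noteq> l"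
  shows "JM M n {k,l} = {j\<in>{1..n}-{k,l}. (M k j = 3) \<noteq> (M l j = 3)}"
proof -
  have "j \<in> JM M n {k,l} \<longleftrightarrow> j \<in> {j\<in>{1..n}-{k,l}. (M k j = 3) \<noteq> (M l j = 3)}" for j
  proof (cases "j \<in> {1..n}")
    case m: True
    have lt: "\<forall>x\<in>{k,l}. M x j < 4" using hw_props(1)[OF assms(1) _ m] assms by auto
    have two: "\<And>x. x \<in> {k,l} \<Longrightarrow> 2 \<le> M x j \<longleftrightarrow> x \<noteq> j" using hw_props(2)[OF assms(1) _ m] assms by auto
    have od: "\<And>x. x \<in> {k,l} \<Longrightarrow> odd (M x j) \<longleftrightarrow> (x = j \<or> M x j = 3)" using hw_props(3)[OF assms(1) _ m] assms by auto
    have c2: "card {x\<in>{k,l}. 2 \<le> M x j} = of_bool (k \<noteq> j) + of_bool (l \<noteq> j)"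
      using card_pair_filter[OF assms(4), of "\<lambda>x. 2 \<le> M x j"] two by auto
    have c1: "card {x\<in>{k,l}. odd (M x j)} = of_bool (k = j \<or> M k j = 3) + of_bool (l = j \<or> M l j = 3)"
      using card_pair_filter[OF assms(4), of "\<lambda>x. odd (M x j)"] od by auto
    show ?thesis unfolding JM_def using ksum_eq1[of "{k,l}" "\<lambda>x. M x j"] lt c1 c2 m assms(4) by auto
  next
    case False then show ?thesis unfolding JM_def by auto
  qed
  then show ?thesis by blast
qed

lemma spin_pair:
  assumes "HW_matrix n M" "spinc_set n M S" "k \<in> {1..n}" "l \<in> {1..n}" "k \<noteq> l"
  shows "odd (of_bool (k \<in> S) + of_bool (l \<in> S) + card {j\<in>S-{k,l}. (M k j = 3) \<noteq> (M l j = 3)})"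
proof -
  have S: "S \<subseteq> {1..n}" using assms(2) unfolding spinc_set_def by auto
  have "card (symdiff (JM M n {k,l}) {k,l} \<inter> S) mod 2 = (card {k,l} choose 2) mod 2"
    using assms(2,3,4) unfolding spinc_set_def by auto
  moreover have "card {k,l} choose 2 = 1" using assms(5) by (simp add: numeral_2_eq_2)
  moreover have "symdiff (JM M n {k,l}) {k,l} \<inter> S = {j\<in>S-{k,l}. (M k j = 3) \<noteq> (M l j = 3)} \<union> ({k,l} \<inter> S)"
    unfolding symdiff_def hw_JM_pair[OF assms(1,3,4,5)] using S by auto
  moreover have "card ({j\<in>S-{k,l}. (M k j = 3) \<noteq> (M l j = 3)} \<union> ({k,l} \<inter> S)) = card {j\<in>S-{k,l}. (M k j = 3) \<noteq> (M l j = 3)} + card ({k,l} \<inter> S)"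
    by (rule card_Un_disjoint) (use S finite_subset[OF S] in auto)
  moreover have "card ({k,l} \<inter> S) = of_bool (k \<in> S) + of_bool (l \<in> S)"
    using card_pair_filter[OF assms(5), of "\<lambda>x. x \<in> S"] by (simp add: Int_def)
  ultimately have "(card {j\<in>S-{k,l}. (M k j = 3) \<noteq> (M l j = 3)} + (of_bool (k \<in> S) + of_bool (l \<in> S))) mod 2 = 1" by simp
  then show ?thesis by presburger
qed

lemma sink_exists:
  fixes R :: "'a \<Rightarrow> 'a \<Rightarrow> bool"
  assumes fin: "finite P" and ne: "P \<noteq> {}"
    and tour: "\<And>k l. k\<in>P \<Longrightarrow> l\<in>P \<Longrightarrow> k\<noteq>l \<Longrightarrow> R k l \<longleftrightarrow> \<not> R l k"
    and tr: "\<And>k l m. k\<in>P \<Longrightarrow> l\<in>P \<Longrightarrow> m\<in>P \<Longrightarrow> k\<noteq>l \<Longrightarrow> l\<noteq>m \<Longrightarrow> k\<noteq>m \<Longrightarrow> R k l \<Longrightarrow> R l m \<Longrightarrow> R k m"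
  shows "\<exists>w\<in>P. \<forall>j\<in>P. j \<noteq> w \<longrightarrow> R j w"
proof -
  define f where "f j = card {x\<in>P. x \<noteq> j \<and> R x j}" for j
  have "Max (f ` P) \<in> f ` P" using fin ne by auto
  then obtain w where w: "w \<in> P" "f w = Max (f ` P)" by auto
  have mx: "f j \<le> f w" if "j \<in> P" for j using w fin that by auto
  show ?thesis
  proof (intro bexI[OF _ w(1)] ballI impI)
    fix j assume j: "j \<in> P" "j \<noteq> w"
    show "R j w"
    proof (rule ccontr)
      assume "\<not> R j w"
      then have wj: "R w j" using tour[OF j(1) w(1) j(2)] by auto
      have sub: "insert w {x\<in>P. x \<noteq> w \<and> R x w} \<subseteq> {x\<in>P. x \<noteq> j \<and> R x j}"
      proof
        fix x assume x: "x \<in> insert w {x\<in>P. x \<noteq> w \<and> R x w}"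
        show "x \<in> {x\<in>P. x \<noteq> j \<and> R x j}"
        proof (cases "x = w")
          case True then show ?thesis using wj j w by auto
        next
          case False
          then have xP: "x \<in> P" "R x w" using x by auto
          have "x \<noteq> j" using xP(2) \<open>\<not> R j w\<close> by auto
          then show ?thesis using tr[OF xP(1) w(1) j(1) False j(2)[symmetric] \<open>x \<noteq> j\<close> xP(2) wj] xP by auto
        qed
      qed
      have "card (insert w {x\<in>P. x \<noteq> w \<and> R x w}) \<le> f j"
        unfolding f_def by (rule card_mono) (use fin sub in auto)
      moreover have "card (insert w {x\<in>P. x \<noteq> w \<and> R x w}) = Suc (f w)"
        unfolding f_def by (rule card_insert_disjoint) (use fin in auto)
      ultimately show False using mx[OF j(1)] by auto
    qed
  qed
qed

lemma source_exists:
  fixes R :: "'a \<Rightarrow> 'a \<Rightarrow> bool"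
  assumes fin: "finite P" and ne: "P \<noteq> {}"
    and tour: "\<And>k l. k\<in>P \<Longrightarrow> l\<in>P \<Longrightarrow> k\<noteq>l \<Longrightarrow> R k l \<longleftrightarrow> \<not> R l k"
    and tr: "\<And>k l m. k\<in>P \<Longrightarrow> l\<in>P \<Longrightarrow> m\<in>P \<Longrightarrow> k\<noteq>l \<Longrightarrow> l\<noteq>m \<Longrightarrow> k\<noteq>m \<Longrightarrow> R k l \<Longrightarrow> R l m \<Longrightarrow> R k m"
  shows "\<exists>w\<in>P. \<forall>j\<in>P. j \<noteq> w \<longrightarrow> R w j"
proof -
  have "\<exists>w\<in>P. \<forall>j\<in>P. j \<noteq> w \<longrightarrow> (\<lambda>a b. R b a) j w"
  proof (rule sink_exists[OF fin ne])
    show "\<And>k l. k\<in>P \<Longrightarrow> l\<in>P \<Longrightarrow> k\<noteq>l \<Longrightarrow> R l k \<longleftrightarrow> \<not> R k l" using tour by blast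
    show "\<And>k l m. k\<in>P \<Longrightarrow> l\<in>P \<Longrightarrow> m\<in>P \<Longrightarrow> k\<noteq>l \<Longrightarrow> l\<noteq>m \<Longrightarrow> k\<noteq>m \<Longrightarrow> R l k \<Longrightarrow> R m l \<Longrightarrow> R m k"
      using tr by blast
  qed
  then show ?thesis by auto
qed

lemma chain_lemma:
  fixes R :: "'a \<Rightarrow> 'a \<Rightarrow> bool" and d :: "'a \<Rightarrow> nat"
  assumes fin: "finite X"
    and tour: "\<And>k l. k\<in>X \<Longrightarrow> l\<in>X \<Longrightarrow> k\<noteq>l \<Longrightarrow> R k l \<longleftrightarrow> \<not> R l k"
    and tr: "\<And>k l m. k\<in>X \<Longrightarrow> l\<in>X \<Longrightarrow> m\<in>X \<Longrightarrow> k\<noteq>l \<Longrightarrow> l\<noteq>m \<Longrightarrow> k\<noteq>m \<Longrightarrow> R k l \<Longrightarrow> R l m \<Longrightarrow> R k m"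
    and mono: "\<And>k l. k\<in>X \<Longrightarrow> l\<in>X \<Longrightarrow> k\<noteq>l \<Longrightarrow> R k l \<Longrightarrow> d k \<le> d l"
    and par: "\<And>k. k\<in>X \<Longrightarrow> odd (d k + card {j\<in>X. j \<noteq> k \<and> R j k} + c)"
    and v: "v \<in> X" and src: "\<And>j. j\<in>X \<Longrightarrow> j \<noteq> v \<Longrightarrow> R v j"
  shows "k \<in> X \<Longrightarrow> card {j\<in>X. j \<noteq> k \<and> R j k} + d v \<le> d k"
proof -
  define ind where "ind k = card {j\<in>X. j \<noteq> k \<and> R j k}" for k
  have main: "\<forall>k\<in>X. ind k = r \<longrightarrow> r + d v \<le> d k" for r
  proof (induction r rule: less_induct)
    case (less r)
    show ?case
    proof (intro ballI impI)
      fix k assume k: "k \<in> X" "ind k = r"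
      show "r + d v \<le> d k"
      proof (cases "r = 0")
        case True
        have "k = v"
        proof (rule ccontr)
          assume "k \<noteq> v"
          then have "v \<in> {j\<in>X. j \<noteq> k \<and> R j k}" using src[OF k(1)] v by auto
          then have "{j\<in>X. j \<noteq> k \<and> R j k} \<noteq> {}" by auto
          then have "ind k \<noteq> 0" unfolding ind_def using fin by auto
          then show False using k True by auto
        qed
        then show ?thesis using True by auto
      next
        case False
        define P where "P = {j\<in>X. j \<noteq> k \<and> R j k}"
        have finP: "finite P" using fin unfolding P_def by auto
        have "P \<noteq> {}" using False k unfolding ind_def P_def by (metis card.empty)
        then obtain w where w: "w \<in> P" "\<forall>j\<in>P. j \<noteq> w \<longrightarrow> R j w"
          using sink_exists[OF finP, of R] tour tr unfolding P_def by blast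
        have wX: "w \<in> X" "w \<noteq> k" "R w k" using w(1) unfolding P_def by auto
        have eq: "{j\<in>X. j \<noteq> w \<and> R j w} = P - {w}"
        proof
          show "{j\<in>X. j \<noteq> w \<and> R j w} \<subseteq> P - {w}"
          proof
            fix x assume x: "x \<in> {j\<in>X. j \<noteq> w \<and> R j w}"
            have "x \<noteq> k" using x wX tour[OF wX(1) k(1) wX(2)] by auto
            then show "x \<in> P - {w}" using x tr[of x w k] wX k unfolding P_def by auto
          qed
          show "P - {w} \<subseteq> {j\<in>X. j \<noteq> w \<and> R j w}" using w unfolding P_def by auto
        qed
        have iw: "ind w = r - 1" using eq w(1) finP k(2) unfolding ind_def P_def by auto
        have ih: "(r - 1) + d v \<le> d w" using less.IH[of "r - 1"] False iw wX(1) by auto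
        have m: "d w \<le> d k" using mono[OF wX(1) k(1) wX(2) wX(3)] .
        have p1: "odd (d w + (r - 1) + c)" using par[OF wX(1)] iw unfolding ind_def by auto
        have p2: "odd (d k + r + c)" using par[OF k(1)] k(2) unfolding ind_def by auto
        have "d w \<noteq> d k" using p1 p2 False by (metis Suc_pred' add_Suc even_Suc neq0_conv add.commute add.left_commute)
        then show ?thesis using ih m False by auto
      qed
    qed
  qed
  assume "k \<in> X"
  then show ?thesis using main unfolding ind_def by auto
qed

lemma arith_final:
  fixes \<alpha> \<beta> a0 A1 b0 B1 eA eB :: nat
  assumes "\<alpha> \<ge> 1" "\<beta> \<ge> 1" "\<alpha> - 1 + a0 \<le> A1" "A1 \<le> \<beta>" "\<beta> - 1 + b0 \<le> B1" "B1 \<le> \<alpha>"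
    "odd (a0 + eA)" "odd (\<alpha> - 1 + A1 + eA)" "odd (b0 + eB)" "odd (\<beta> - 1 + B1 + eB)"
    "a0 \<ge> 1 \<Longrightarrow> B1 = \<alpha>" "b0 \<ge> 1 \<Longrightarrow> A1 = \<beta>" "A1 = \<beta> \<Longrightarrow> b0 \<ge> 1" "B1 = \<alpha> \<Longrightarrow> a0 \<ge> 1"
    "odd (\<alpha> + \<beta> + eA + eB)" "eA \<le> 1" "eB \<le> 1"
  shows False
proof -
  consider "eA = 0" "eB = 0" | "eA = 1" "eB = 0" | "eA = 0" "eB = 1" | "eA = 1" "eB = 1" using assms(16,17) by linarith
  then show False
  proof cases
    case 1
    then show ?thesis using assms by presburger
  next
    case 2
    then show ?thesis using assms by presburger
  next
    case 3
    then show ?thesis using assms by presburger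
  next
    case 4
    then show ?thesis using assms by presburger
  qed
qed

lemma core:
  fixes V S :: "nat set" and A :: "nat \<Rightarrow> nat \<Rightarrow> bool" and T :: "nat \<Rightarrow> bool"
  assumes fin: "finite V" and SV: "S \<subseteq> V" and oddV: "odd (card V)" and c5: "card V \<ge> 5"
   and H1: "\<And>k l. k\<in>S \<Longrightarrow> l\<in>S \<Longrightarrow> k\<noteq>l \<Longrightarrow> (A k l \<noteq> A l k) \<longleftrightarrow> T k = T l"
   and H2: "\<And>q k. q\<in>V-S \<Longrightarrow> k\<in>S \<Longrightarrow> A q k \<longleftrightarrow> T q = T k"
   and H3: "\<And>q q'. q\<in>V-S \<Longrightarrow> q'\<in>V-S \<Longrightarrow> q\<noteq>q' \<Longrightarrow> T q \<noteq> T q'"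
   and H4: "\<And>j. j\<in>S \<Longrightarrow> odd (card {i\<in>V-{j}. A i j})"
   and H5: "\<And>i j k. i\<in>S \<Longrightarrow> j\<in>S \<Longrightarrow> k\<in>S \<Longrightarrow> i\<noteq>j \<Longrightarrow> i\<noteq>k \<Longrightarrow> j\<noteq>k \<Longrightarrow>
              (A j i = A k i) \<or> (A i j = A k j) \<or> (A i k = A j k)"
  shows False
proof -
  have finS: "finite S" using fin SV finite_subset by auto
  define X where "X \<tau> = {k\<in>S. T k = \<tau>}" for \<tau>
  define Nb where "Nb k = {m\<in>S. T m \<noteq> T k \<and> A k m}" for k
  define eQ where "eQ \<tau> = card {q\<in>V-S. T q = \<tau>}" for \<tau>
  have finX: "finite (X \<tau>)" for \<tau> using finS unfolding X_def by auto
  have finN: "finite (Nb k)" for k using finS unfolding Nb_def by auto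
  have cross: "A k m = A m k" if "k\<in>S" "m\<in>S" "T k \<noteq> T m" for k m
    using H1[OF that(1,2)] that by (cases "k = m") auto
  have tour: "A k l \<longleftrightarrow> \<not> A l k" if "k\<in>S" "l\<in>S" "k\<noteq>l" "T k = T l" for k l
    using H1[OF that(1-3)] that(4) by auto
  have trans: "A k m" if "k\<in>S" "l\<in>S" "m\<in>S" "k\<noteq>l" "l\<noteq>m" "k\<noteq>m" "T k = T l" "T l = T m" "A k l" "A l m" for k l m
  proof (rule ccontr)
    assume "\<not> A k m"
    then have "A m k" using tour[OF that(1,3,6)] that by auto
    have "\<not> A l k" using tour[OF that(2,1)] that(4,7,9) by auto
    have "\<not> A m l" using tour[OF that(3,2)] that(5,8,10) by auto
    then show False using H5[OF that(1,2,3,4,6,5)] \<open>A m k\<close> \<open>\<not> A k m\<close> \<open>\<not> A l k\<close> that(9,10) by auto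
  qed
  have UC: "A l m" if "k\<in>S" "l\<in>S" "m\<in>S" "k\<noteq>l" "T k = T l" "T m \<noteq> T k" "A k l" "A k m" for k l m
  proof (rule ccontr)
    assume nlm: "\<not> A l m"
    have km: "k \<noteq> m" "l \<noteq> m" using that by auto
    have "\<not> A l k" using tour[OF that(1,2,4,5)] that(7) by auto
    moreover have "A m k" using cross[OF that(1,3)] that by auto
    moreover have "\<not> A m l" using cross[OF that(2,3)] that nlm by auto
    ultimately show False using H5[OF that(1,2,3,4) km] that(7,8) nlm by auto
  qed
  have Nsub: "Nb k \<subseteq> X (\<not> \<tau>)" if "T k = \<tau>" for k \<tau> using that unfolding Nb_def X_def by auto
  have Nmono: "Nb k \<subseteq> Nb l" if "k\<in>S" "l\<in>S" "k\<noteq>l" "T k = T l" "A k l" for k l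
    using UC[OF that(1,2) _ that(3,4) _ that(5)] that unfolding Nb_def by auto
  have colpar: "odd (card (Nb k) + card {j\<in>X \<tau>. j \<noteq> k \<and> A j k} + eQ \<tau>)" if "k \<in> X \<tau>" for k \<tau>
  proof -
    have kS: "k \<in> S" "T k = \<tau>" using that unfolding X_def by auto
    have e: "{i\<in>V-{k}. A i k} = ({j\<in>X \<tau>. j \<noteq> k \<and> A j k} \<union> Nb k) \<union> {q\<in>V-S. T q = \<tau>}"
    proof -
      have "\<And>i. i\<in>V-S \<Longrightarrow> A i k \<longleftrightarrow> T i = \<tau>" using H2 kS by auto
      moreover have "\<And>i. i\<in>S \<Longrightarrow> T i \<noteq> \<tau> \<Longrightarrow> A i k \<longleftrightarrow> A k i" using cross kS by metis
      ultimately show ?thesis using SV kS unfolding X_def Nb_def by auto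
    qed
    have d1: "({j\<in>X \<tau>. j \<noteq> k \<and> A j k} \<union> Nb k) \<inter> {q\<in>V-S. T q = \<tau>} = {}"
      unfolding X_def Nb_def by auto
    have d2: "{j\<in>X \<tau>. j \<noteq> k \<and> A j k} \<inter> Nb k = {}" unfolding X_def Nb_def using kS by auto
    have f3: "finite {q\<in>V-S. T q = \<tau>}" using fin by auto
    have f1: "finite {j\<in>X \<tau>. j \<noteq> k \<and> A j k}" using finX by auto
    have "card {i\<in>V-{k}. A i k} = card {j\<in>X \<tau>. j \<noteq> k \<and> A j k} + card (Nb k) + eQ \<tau>"
      unfolding e eQ_def card_Un_disjoint[OF finite_UnI[OF f1 finN] f3 d1] card_Un_disjoint[OF f1 finN d2] ..
    then show ?thesis using H4[OF kS(1)] by (simp add: ac_simps)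
  qed
  have cls: "\<exists>v W. v\<in>X \<tau> \<and> W\<in>X \<tau> \<and> (\<forall>j\<in>X \<tau>. j\<noteq>v \<longrightarrow> A v j) \<and> (\<forall>j\<in>X \<tau>. j\<noteq>W \<longrightarrow> A j W) \<and>
       card (X \<tau>) - 1 + card (Nb v) \<le> card (Nb W) \<and> odd (card (Nb v) + eQ \<tau>) \<and>
       odd (card (X \<tau>) - 1 + card (Nb W) + eQ \<tau>)" if ne: "X \<tau> \<noteq> {}" for \<tau>
  proof -
    have tourX: "\<And>k l. k\<in>X \<tau> \<Longrightarrow> l\<in>X \<tau> \<Longrightarrow> k\<noteq>l \<Longrightarrow> A k l \<longleftrightarrow> \<not> A l k"
      unfolding X_def by (rule tour) auto
    have trX: "\<And>k l m. k\<in>X \<tau> \<Longrightarrow> l\<in>X \<tau> \<Longrightarrow> m\<in>X \<tau> \<Longrightarrow> k\<noteq>l \<Longrightarrow> l\<noteq>m \<Longrightarrow> k\<noteq>m \<Longrightarrow> A k l \<Longrightarrow> A l m \<Longrightarrow> A k m"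
      unfolding X_def by (rule trans) auto
    have ex1: "\<exists>w\<in>X \<tau>. \<forall>j\<in>X \<tau>. j \<noteq> w \<longrightarrow> A w j"
      by (rule source_exists[of "X \<tau>" A, OF finX ne tourX trX])
    then obtain v where v: "v \<in> X \<tau>" "\<forall>j\<in>X \<tau>. j \<noteq> v \<longrightarrow> A v j" by blast
    have ex2: "\<exists>w\<in>X \<tau>. \<forall>j\<in>X \<tau>. j \<noteq> w \<longrightarrow> A j w"
      by (rule sink_exists[of "X \<tau>" A, OF finX ne tourX trX])
    then obtain W where W: "W \<in> X \<tau>" "\<forall>j\<in>X \<tau>. j \<noteq> W \<longrightarrow> A j W" by blast
    have monoX: "\<And>k l. k\<in>X \<tau> \<Longrightarrow> l\<in>X \<tau> \<Longrightarrow> k\<noteq>l \<Longrightarrow> A k l \<Longrightarrow> card (Nb k) \<le> card (Nb l)"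
      unfolding X_def by (rule card_mono[OF finN], rule Nmono) auto
    have parX: "\<And>k. k\<in>X \<tau> \<Longrightarrow> odd (card (Nb k) + card {j\<in>X \<tau>. j \<noteq> k \<and> A j k} + eQ \<tau>)" using colpar by blast
    have srcv: "\<And>j. j \<in> X \<tau> \<Longrightarrow> j \<noteq> v \<Longrightarrow> A v j" using v(2) by blast
    have ch: "card {j\<in>X \<tau>. j \<noteq> W \<and> A j W} + card (Nb v) \<le> card (Nb W)"
      by (rule chain_lemma[where X="X \<tau>" and R=A and d="\<lambda>k. card (Nb k)" and c="eQ \<tau>" and v=v and k=W,
          OF finX tourX trX monoX parX v(1) srcv W(1)])
    have sW: "{j\<in>X \<tau>. j \<noteq> W \<and> A j W} = X \<tau> - {W}" using W by auto
    have cW: "card {j\<in>X \<tau>. j \<noteq> W \<and> A j W} = card (X \<tau>) - 1" unfolding sW using W finX by auto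
    have sv: "{j\<in>X \<tau>. j \<noteq> v \<and> A j v} = {}" using v tourX by blast
    have pv: "odd (card (Nb v) + eQ \<tau>)" using colpar[OF v(1)] sv by simp
    have pW: "odd (card (X \<tau>) - 1 + card (Nb W) + eQ \<tau>)" using colpar[OF W(1)] cW by (simp add: ac_simps)
    show ?thesis
      apply (rule exI[of _ v], rule exI[of _ W])
      using v W ch[unfolded cW] pv pW by blast
  qed
  have transfer1: "card (Nb W') = card (X \<tau>)"
    if v: "v \<in> X \<tau>" "\<forall>j\<in>X \<tau>. j\<noteq>v \<longrightarrow> A v j" and W': "W' \<in> X (\<not>\<tau>)" "\<forall>j\<in>X (\<not>\<tau>). j\<noteq>W' \<longrightarrow> A j W'"
      and nz: "Nb v \<noteq> {}" for v W' \<tau>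
  proof -
    obtain m where m: "m \<in> Nb v" using nz by auto
    have mS: "m \<in> S" "T m \<noteq> \<tau>" "A v m" using m v unfolding Nb_def X_def by auto
    have vS: "v \<in> S" "T v = \<tau>" using v unfolding X_def by auto
    have WS: "W' \<in> S" "T W' \<noteq> \<tau>" using W' unfolding X_def by auto
    have AWv: "A W' v"
    proof (cases "m = W'")
      case True then show ?thesis using mS cross vS WS by metis
    next
      case False
      have "A m W'" using W' mS False unfolding X_def by auto
      moreover have "A m v" using cross[OF vS(1) mS(1)] mS vS by auto
      ultimately show ?thesis using UC[OF mS(1) WS(1) vS(1) False] mS WS vS by auto
    qed
    have "Nb W' = X \<tau>"
    proof
      show "Nb W' \<subseteq> X \<tau>" using Nsub[of W' "\<not>\<tau>"] WS by auto
      show "X \<tau> \<subseteq> Nb W'"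
      proof
        fix l assume l: "l \<in> X \<tau>"
        show "l \<in> Nb W'"
        proof (cases "l = v")
          case True then show ?thesis using AWv vS WS unfolding Nb_def by auto
        next
          case False
          have "A v l" using v l False by auto
          moreover have "A v W'" using cross[OF vS(1) WS(1)] AWv vS WS by auto
          moreover have lS: "l \<in> S" "T l = \<tau>" using l unfolding X_def by auto
          ultimately have "A l W'" using UC[OF vS(1) lS(1) WS(1)] False vS WS lS by auto
          then have "A W' l" using cross[OF lS(1) WS(1)] lS WS by auto
          then show ?thesis using lS WS unfolding Nb_def by auto
        qed
      qed
    qed
    then show ?thesis by simp
  qed
  have transfer2: "Nb v' \<noteq> {}"
    if W: "W \<in> X \<tau>" "card (Nb W) = card (X (\<not>\<tau>))" and v': "v' \<in> X (\<not>\<tau>)" for W v' \<tau>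
  proof -
    have "Nb W = X (\<not>\<tau>)"
      using card_subset_eq[OF finX Nsub[of W \<tau>]] W unfolding X_def by auto
    then have "v' \<in> Nb W" using v' by auto
    then have "W \<in> Nb v'" using W v' cross unfolding Nb_def X_def by auto
    then show ?thesis by auto
  qed
  have eQle: "eQ \<tau> \<le> 1" for \<tau>
  proof -
    have "card {q\<in>V-S. T q = \<tau>} \<le> Suc 0"
    proof (subst card_le_Suc0_iff_eq)
      show "finite {q\<in>V-S. T q = \<tau>}" using fin by auto
      show "\<forall>x\<in>{q\<in>V-S. T q = \<tau>}. \<forall>y\<in>{q\<in>V-S. T q = \<tau>}. x = y" using H3 by blast
    qed
    then show ?thesis unfolding eQ_def by auto
  qed
  have cardV: "card V = card (X True) + card (X False) + eQ True + eQ False"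
  proof -
    have e: "V = (X True \<union> X False) \<union> ({q\<in>V-S. T q = True} \<union> {q\<in>V-S. T q = False})"
      using SV unfolding X_def by auto
    have fQ: "finite {q\<in>V-S. T q = b}" for b using fin by auto
    have d1: "(X True \<union> X False) \<inter> ({q\<in>V-S. T q = True} \<union> {q\<in>V-S. T q = False}) = {}"
      unfolding X_def by auto
    have d2: "X True \<inter> X False = {}" unfolding X_def by auto
    have d3: "{q\<in>V-S. T q = True} \<inter> {q\<in>V-S. T q = False} = {}" by auto
    have "card V = card (X True \<union> X False) + card ({q\<in>V-S. T q = True} \<union> {q\<in>V-S. T q = False})"
      by (subst e, rule card_Un_disjoint) (use finX fQ[of True] fQ[of False] d1 in auto)
    also have "\<dots> = card (X True) + card (X False) + (eQ True + eQ False)"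
      unfolding eQ_def card_Un_disjoint[OF finX finX d2] card_Un_disjoint[OF fQ fQ d3] ..
    finally show ?thesis by simp
  qed
  have oddS: "odd (card (X True) + card (X False) + eQ True + eQ False)" using cardV oddV by simp
  have ge: "card (X True) + card (X False) \<ge> 3" using cardV c5 eQle[of True] eQle[of False] by linarith
  have NsubT: "Nb k \<subseteq> X True" if "k \<in> X False" for k using Nsub[of k False] that unfolding X_def by auto
  have NsubF: "Nb k \<subseteq> X False" if "k \<in> X True" for k using Nsub[of k True] that unfolding X_def by auto
  show False
  proof (cases "X True = {}")
    case True
    then have ne: "X False \<noteq> {}" using ge by auto
    obtain v W where c: "v\<in>X False" "W\<in>X False" "card (X False) - 1 + card (Nb v) \<le> card (Nb W)"
      using cls[OF ne] by blast
    have "Nb W = {}" using NsubT[OF c(2)] True by auto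
    then show False using c(3) ge True by auto
  next
    case neA: False
    show False
    proof (cases "X False = {}")
      case True
      obtain v W where c: "v\<in>X True" "W\<in>X True" "card (X True) - 1 + card (Nb v) \<le> card (Nb W)"
        using cls[OF neA] by blast
      have "Nb W = {}" using NsubF[OF c(2)] True by auto
      then show False using c(3) ge True by auto
    next
      case neB: False
      obtain vA WA where cA: "vA\<in>X True" "WA\<in>X True" "\<forall>j\<in>X True. j\<noteq>vA \<longrightarrow> A vA j" "\<forall>j\<in>X True. j\<noteq>WA \<longrightarrow> A j WA"
        "card (X True) - 1 + card (Nb vA) \<le> card (Nb WA)" "odd (card (Nb vA) + eQ True)"
        "odd (card (X True) - 1 + card (Nb WA) + eQ True)"
        using cls[OF neA] by blast
      obtain vB WB where cB: "vB\<in>X False" "WB\<in>X False" "\<forall>j\<in>X False. j\<noteq>vB \<longrightarrow> A vB j" "\<forall>j\<in>X False. j\<noteq>WB \<longrightarrow> A j WB"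
        "card (X False) - 1 + card (Nb vB) \<le> card (Nb WB)" "odd (card (Nb vB) + eQ False)"
        "odd (card (X False) - 1 + card (Nb WB) + eQ False)"
        using cls[OF neB] by blast
      have XnT: "X (\<not> True) = X False" and XnF: "X (\<not> False) = X True" by simp_all
      have le1: "card (Nb WA) \<le> card (X False)" using card_mono[OF finX NsubF[OF cA(2)]] .
      have le2: "card (Nb WB) \<le> card (X True)" using card_mono[OF finX NsubT[OF cB(2)]] .
      have t1: "card (Nb WB) = card (X True)" if "card (Nb vA) \<ge> 1"
      proof -
        have "Nb vA \<noteq> {}" using that by auto
        then show ?thesis using transfer1[of vA True WB] cA(1,3) cB(2,4) by simp
      qed
      have t2: "card (Nb WA) = card (X False)" if "card (Nb vB) \<ge> 1"
      proof -
        have "Nb vB \<noteq> {}" using that by auto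
        then show ?thesis using transfer1[of vB False WA] cB(1,3) cA(2,4) by simp
      qed
      have t3: "card (Nb vB) \<ge> 1" if "card (Nb WA) = card (X False)"
      proof -
        have "Nb vB \<noteq> {}" using transfer2[of WA True vB] that cA(2) cB(1) by simp
        then show ?thesis using finN by (simp add: Suc_le_eq card_gt_0_iff)
      qed
      have t4: "card (Nb vA) \<ge> 1" if "card (Nb WB) = card (X True)"
      proof -
        have "Nb vA \<noteq> {}" using transfer2[of WB False vA] that cB(2) cA(1) by simp
        then show ?thesis using finN by (simp add: Suc_le_eq card_gt_0_iff)
      qed
      have a1: "card (X True) \<ge> 1" "card (X False) \<ge> 1" using neA neB finX by (auto simp: Suc_le_eq card_gt_0_iff)
      show False
        by (rule arith_final[OF a1 cA(5) le1 cB(5) le2 cA(6) cA(7) cB(6) cB(7) t1 t2 t3 t4 oddS eQle eQle])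
    qed
  qed
qed


lemma card_xor_parity:
  assumes "finite W"
  shows "odd (card {x\<in>W. P x \<noteq> Q x}) \<longleftrightarrow> (odd (card {x\<in>W. P x}) \<noteq> odd (card {x\<in>W. Q x}))"
proof -
  have f: "finite {x\<in>W. R x}" for R using assms by auto
  have e1: "{x\<in>W. P x} = {x\<in>W. P x \<and> Q x} \<union> {x\<in>W. P x \<and> \<not> Q x}" by auto
  have e2: "{x\<in>W. Q x} = {x\<in>W. P x \<and> Q x} \<union> {x\<in>W. \<not> P x \<and> Q x}" by auto
  have e3: "{x\<in>W. P x \<noteq> Q x} = {x\<in>W. P x \<and> \<not> Q x} \<union> {x\<in>W. \<not> P x \<and> Q x}" by auto
  have c1: "card {x\<in>W. P x} = card {x\<in>W. P x \<and> Q x} + card {x\<in>W. P x \<and> \<not> Q x}"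
    unfolding e1 by (rule card_Un_disjoint[OF f f]) auto
  have c2: "card {x\<in>W. Q x} = card {x\<in>W. P x \<and> Q x} + card {x\<in>W. \<not> P x \<and> Q x}"
    unfolding e2 by (rule card_Un_disjoint[OF f f]) auto
  have c3: "card {x\<in>W. P x \<noteq> Q x} = card {x\<in>W. P x \<and> \<not> Q x} + card {x\<in>W. \<not> P x \<and> Q x}"
    unfolding e3 by (rule card_Un_disjoint[OF f f]) auto
  show ?thesis unfolding c1 c2 c3 by auto
qed

lemma pair_T:
  assumes "HW_matrix n M" "spinc_set n M S" "k \<in> {1..n}" "l \<in> {1..n}" "k \<noteq> l"
  shows "(odd (of_bool (k \<in> S) + card {j\<in>S-{k}. M k j = 3}) = odd (of_bool (l \<in> S) + card {j\<in>S-{l}. M l j = 3}))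
     \<longleftrightarrow> ((l \<in> S \<and> M k l = 3) \<noteq> (k \<in> S \<and> M l k = 3))"
proof -
  have S: "S \<subseteq> {1..n}" using assms(2) unfolding spinc_set_def by auto
  have finS: "finite S" using S finite_subset by auto
  have f: "finite {j\<in>S-{k,l}. R j}" for R using finS by auto
  have sp: "odd (of_bool (k \<in> S) + of_bool (l \<in> S) + card {j\<in>S-{k,l}. (M k j = 3) \<noteq> (M l j = 3)})"
    by (rule spin_pair[OF assms])
  have x: "odd (card {j\<in>S-{k,l}. (M k j = 3) \<noteq> (M l j = 3)}) \<longleftrightarrow>
      (odd (card {j\<in>S-{k,l}. M k j = 3}) \<noteq> odd (card {j\<in>S-{k,l}. M l j = 3}))"
    by (rule card_xor_parity) (use finS in auto)
  have ck: "card {j\<in>S-{k}. M k j = 3} = card {j\<in>S-{k,l}. M k j = 3} + of_bool (l \<in> S \<and> M k l = 3)"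
  proof -
    have "{j\<in>S-{k}. M k j = 3} = {j\<in>S-{k,l}. M k j = 3} \<union> (if l \<in> S \<and> M k l = 3 then {l} else {})"
      using assms(5) by auto
    then show ?thesis by (simp add: card_Un_disjoint[OF f] finS split: if_split)
  qed
  have cl: "card {j\<in>S-{l}. M l j = 3} = card {j\<in>S-{k,l}. M l j = 3} + of_bool (k \<in> S \<and> M l k = 3)"
  proof -
    have "{j\<in>S-{l}. M l j = 3} = {j\<in>S-{k,l}. M l j = 3} \<union> (if k \<in> S \<and> M l k = 3 then {k} else {})"
      using assms(5) by auto
    then show ?thesis by (simp add: card_Un_disjoint[OF f] finS split: if_split)
  qed
  show ?thesis using sp x unfolding ck cl by auto
qed

theorem mainTheorem18:
  fixes n :: nat and M :: "nat \<Rightarrow> nat \<Rightarrow> nat"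
  assumes "n \<ge> 5" and "odd n" and "HW_matrix n M"
  shows "\<not> (\<exists>S. spinc_set n M S)"
proof
  assume "\<exists>S. spinc_set n M S"
  then obtain S where sp: "spinc_set n M S" by blast
  have SV: "S \<subseteq> {1..n}" using sp unfolding spinc_set_def by auto
  define T where "T k = odd (of_bool (k \<in> S) + card {j\<in>S-{k}. M k j = 3})" for k
  have pT: "T k = T l \<longleftrightarrow> ((l \<in> S \<and> M k l = 3) \<noteq> (k \<in> S \<and> M l k = 3))"
    if "k \<in> {1..n}" "l \<in> {1..n}" "k \<noteq> l" for k l
    using pair_T[OF assms(3) sp that] unfolding T_def by simp
  show False
  proof (rule core[of "{1..n}" S "\<lambda>k l. M k l = 3" T])
    show "finite {1..n}" by simp
    show "S \<subseteq> {1..n}" by (rule SV)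
    show "odd (card {1..n})" using assms(2) by simp
    show "card {1..n} \<ge> 5" using assms(1) by simp
    show "\<And>k l. k\<in>S \<Longrightarrow> l\<in>S \<Longrightarrow> k\<noteq>l \<Longrightarrow> ((M k l = 3) \<noteq> (M l k = 3)) \<longleftrightarrow> T k = T l"
      using pT SV by blast
    show "\<And>q k. q\<in>{1..n}-S \<Longrightarrow> k\<in>S \<Longrightarrow> (M q k = 3) \<longleftrightarrow> T q = T k"
    proof -
      fix q k assume q: "q\<in>{1..n}-S" and k: "k\<in>S"
      then have "q \<noteq> k" by auto
      then show "(M q k = 3) \<longleftrightarrow> T q = T k" using pT[of q k] q k SV by auto
    qed
    show "\<And>q q'. q\<in>{1..n}-S \<Longrightarrow> q'\<in>{1..n}-S \<Longrightarrow> q\<noteq>q' \<Longrightarrow> T q \<noteq> T q'"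
      using pT by auto
    show "\<And>j. j\<in>S \<Longrightarrow> odd (card {i\<in>{1..n}-{j}. M i j = 3})"
      using hw_col[OF assms(3)] SV by blast
    show "\<And>i j k. i\<in>S \<Longrightarrow> j\<in>S \<Longrightarrow> k\<in>S \<Longrightarrow> i\<noteq>j \<Longrightarrow> i\<noteq>k \<Longrightarrow> j\<noteq>k \<Longrightarrow>
              ((M j i = 3) = (M k i = 3)) \<or> ((M i j = 3) = (M k j = 3)) \<or> ((M i k = 3) = (M j k = 3))"
      using hw_tri[OF assms(3,1)] SV by blast
  qed
qed

end
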